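(* Let $\mathbf F\in\mathcal F_d^0$ with densities $\mathbf f_1,\dots,\mathbf f_d$, and let $\delta^{\mathbf F}=(\delta_{(1)},\dots,\delta_{(d)})$. Then for $\prod_{i=1}^d\mathbf f_i(x_i)\,dx_1\cdots dx_d$-almost every $x\in\mathbb R^d$, $$\mathbf 1_{T^{\mathbf F}}\big(\mathbf F_1(x_1),\dots,\mathbf F_d(x_d)\big)\;\mathbf 1_{L_{\delta^{\mathbf F}}}\big(\delta_{(1)}^{-1}\circ\mathbf F_1(x_1),\dots,\delta_{(d)}^{-1}\circ\mathbf F_d(x_d)\big)=\mathbf 1_{L^{\mathbf F}}(x).$$
   Context: $I=[0,1]$. Generalized inverse $J^{-1}(t)=\inf\{s\in\mathbb R:J(s)\ge t\}$. $\mathcal F_d$: $d$-tuples $\mathbf F=(\mathbf F_1,\dots,\mathbf F_d)$ of continuous cdf's on $\mathbb R$ with $\mathbf F_{i-1}\ge\mathbf F_i$; $\mathcal F_d^0$: those $\mathbf F$ for which there is an absolutely continuous cdf of a random vector $X$ with $X_1\le\dots\le X_d$ a.s. and $X_i\sim\mathbf F_i$. $G=\frac1d\sum\mathbf F_i$, $\delta_{(i)}=\mathbf F_i\circ G^{-1}$. $T^{\mathbf F}=\{u\in I^d:\mathbf F_1^{-1}(u_1)\le\dots\le\mathbf F_d^{-1}(u_d)\}$. For $2\le i\le d$: $\Psi_i^{\mathbf F}=\{s\in\mathbb R:\mathbf F_{i-1}(s)>\mathbf F_i(s)\}$, $\Psi_i^{\delta}=\{s\in(0,1):\delta_{(i-1)}(s)>\delta_{(i)}(s)\}$.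 $L^{\mathbf F}=\{x\in\mathbb R^d:x_1\le\dots\le x_d,\ (x_{i-1},x_i)\subset\Psi_i^{\mathbf F}\ \forall\,2\le i\le d\}$ and $L_{\delta}=\{u\in I^d:(u_{(i-1)},u_{(i)})\subset\Psi_i^{\delta}\ \forall\,2\le i\le d\}$, where $u_{(1)}\le\dots\le u_{(d)}$ are the ordered coordinates of $u$. *)

theory Defs
  imports "HOL-Probability.Probability"
begin

text \<open>Tuples are functions on the index set {1..d}; points of R^d are functions nat => real
  (only coordinates 1..d matter).\<close>

definition is_cdf :: "(real \<Rightarrow> real) \<Rightarrow> bool" where
  "is_cdf J \<longleftrightarrow> mono J \<and> (\<forall>x. continuous (at_right x) J)
     \<and> (J \<longlongrightarrow> 0) at_bot \<and> (J \<longlongrightarrow> 1) at_top"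

definition Fd :: "nat \<Rightarrow> (nat \<Rightarrow> real \<Rightarrow> real) \<Rightarrow> bool" where
  "Fd d F \<longleftrightarrow> (\<forall>i\<in>{1..d}. is_cdf (F i) \<and> continuous_on UNIV (F i))
     \<and> (\<forall>i\<in>{2..d}. \<forall>s. F i s \<le> F (i - 1) s)"

definition Fd0 :: "nat \<Rightarrow> (nat \<Rightarrow> real \<Rightarrow> real) \<Rightarrow> bool" where
  "Fd0 d F \<longleftrightarrow> Fd d F \<and>
     (\<exists>\<mu>. prob_space \<mu> \<and> sets \<mu> = sets (PiM {1..d} (\<lambda>_. lborel))
        \<and> absolutely_continuous (PiM {1..d} (\<lambda>_. lborel)) \<mu>
        \<and> (AE x in \<mu>. \<forall>i\<in>{2..d}. x (i - 1) \<le> x i)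
        \<and> (\<forall>i\<in>{1..d}. \<forall>t. measure \<mu> {x \<in> space \<mu>. x i \<le> t} = F i t))"

definition genInv :: "(real \<Rightarrow> real) \<Rightarrow> real \<Rightarrow> real" where
  "genInv J t = Inf {s. J s \<ge> t}"

definition Gmix :: "nat \<Rightarrow> (nat \<Rightarrow> real \<Rightarrow> real) \<Rightarrow> real \<Rightarrow> real" where
  "Gmix d F s = (\<Sum>i\<in>{1..d}. F i s) / real d"

text \<open>delta_(i) = F_i o G^{-1} on (0,1), extended as a cdf on [0,1] (0 left of 0, 1 from 1 on).\<close>
definition deltaF :: "nat \<Rightarrow> (nat \<Rightarrow> real \<Rightarrow> real) \<Rightarrow> nat \<Rightarrow> real \<Rightarrow> real" where
  "deltaF d F i s = (if s \<le> 0 then 0 else if 1 \<le> s then 1 else F i (genInv (Gmix d F) s))"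

definition TF :: "nat \<Rightarrow> (nat \<Rightarrow> real \<Rightarrow> real) \<Rightarrow> (nat \<Rightarrow> real) set" where
  "TF d F = {u. (\<forall>i\<in>{1..d}. u i \<in> {0..1})
     \<and> (\<forall>i\<in>{2..d}. genInv (F (i - 1)) (u (i - 1)) \<le> genInv (F i) (u i))}"

definition PsiF :: "(nat \<Rightarrow> real \<Rightarrow> real) \<Rightarrow> nat \<Rightarrow> real set" where
  "PsiF F i = {s. F (i - 1) s > F i s}"

definition PsiDelta :: "(nat \<Rightarrow> real \<Rightarrow> real) \<Rightarrow> nat \<Rightarrow> real set" where
  "PsiDelta \<delta> i = {s. 0 < s \<and> s < 1 \<and> \<delta> (i - 1) s > \<delta> i s}"

definition LF :: "nat \<Rightarrow> (nat \<Rightarrow> real \<Rightarrow> real) \<Rightarrow> (nat \<Rightarrow> real) set" where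
  "LF d F = {x. (\<forall>i\<in>{2..d}. x (i - 1) \<le> x i)
     \<and> (\<forall>i\<in>{2..d}. {x (i - 1)<..<x i} \<subseteq> PsiF F i)}"

definition ord_stat :: "nat \<Rightarrow> (nat \<Rightarrow> real) \<Rightarrow> nat \<Rightarrow> real" where
  "ord_stat d u k = sort (map u [1..<d+1]) ! (k - 1)"

definition Ldelta :: "nat \<Rightarrow> (nat \<Rightarrow> real \<Rightarrow> real) \<Rightarrow> (nat \<Rightarrow> real) set" where
  "Ldelta d \<delta> = {u. (\<forall>i\<in>{1..d}. u i \<in> {0..1})
     \<and> (\<forall>i\<in>{2..d}. {ord_stat d u (i - 1)<..<ord_stat d u i} \<subseteq> PsiDelta \<delta> i)}"

end

theory Submission
  imports Defs
begin


lemma AE_PiM_component: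
  fixes I :: "nat set" and R :: "real \<Rightarrow> bool"
  assumes fin: "finite I" and i: "i \<in> I" and ae: "AE t in lborel. R t"
  shows "AE x in PiM I (\<lambda>_. lborel). R (x i)"
proof -
  have psf: "product_sigma_finite (\<lambda>_::nat. lborel :: real measure)" by unfold_locales
  from ae obtain N where N: "{t \<in> space lborel. \<not> R t} \<subseteq> N" "N \<in> null_sets lborel"
    unfolding eventually_ae_filter by auto
  define B where "B = Pi\<^sub>E I (\<lambda>j. if j = i then N else UNIV)"
  have "emeasure (PiM I (\<lambda>_. lborel)) B = (\<Prod>j\<in>I. emeasure lborel (if j = i then N else UNIV))"
    unfolding B_def apply (rule product_sigma_finite.emeasure_PiM[OF psf fin]) using N(2) by auto
  also have "\<dots> = 0" using fin i N(2) by (intro prod_zero) auto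
  finally have "B \<in> null_sets (PiM I (\<lambda>_. lborel))"
    unfolding B_def using N(2) fin by (intro null_setsI) (auto intro!: sets_PiM_I_finite)
  moreover have "{x \<in> space (PiM I (\<lambda>_. lborel)). \<not> R (x i)} \<subseteq> B"
    using N(1) i by (auto simp: B_def space_PiM PiE_iff extensional_def)
  ultimately show ?thesis by (rule AE_I')
qed



lemma subsingleton_finite: "(\<forall>x\<in>S. \<forall>y\<in>S. x = y) \<Longrightarrow> finite S"
proof (cases "S = {}")
  case False
  assume h: "\<forall>x\<in>S. \<forall>y\<in>S. x = y"
  then obtain x where "x \<in> S" using False by auto
  then have "S \<subseteq> {x}" using h by auto
  then show ?thesis using finite_subset by auto
qed simp

definition good :: "(real \<Rightarrow> real) \<Rightarrow> real \<Rightarrow> bool" where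
  "good J t \<longleftrightarrow> 0 < J t \<and> J t < 1 \<and> (\<forall>y. y \<noteq> t \<longrightarrow> J y \<noteq> J t)"

definition cover :: "(real \<Rightarrow> real) \<Rightarrow> real \<Rightarrow> real set" where
  "cover F c = (\<Union>pq\<in>\<rat> \<times> \<rat>. if F (fst pq) = c \<and> F (snd pq) = c then {fst pq<..snd pq} else {})
     \<union> {t. F t = c \<and> (\<forall>a. F a = c \<longrightarrow> t \<le> a)} \<union> {t. F t = c \<and> (\<forall>a. F a = c \<longrightarrow> a \<le> t)}"

lemma level_subset_cover:
  assumes "mono F"
  shows "{t. F t = c} \<subseteq> cover F c"
proof
  fix t assume t: "t \<in> {t. F t = c}"
  show "t \<in> cover F c"
  proof (cases "(\<forall>a. F a = c \<longrightarrow> t \<le> a) \<or> (\<forall>a. F a = c \<longrightarrow> a \<le> t)")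
    case True then show ?thesis using t unfolding cover_def by auto
  next
    case False
    then obtain a b where ab: "F a = c" "a < t" "F b = c" "t < b" by force
    obtain p where p: "p \<in> \<rat>" "a < p" "p < t" using Rats_dense_in_real[OF ab(2)] by auto
    obtain q where q: "q \<in> \<rat>" "t < q" "q < b" using Rats_dense_in_real[OF ab(4)] by auto
    have "F a \<le> F p" "F p \<le> F t" "F t \<le> F q" "F q \<le> F b"
      using p q assms by (auto intro: monoD)
    then have "F p = c" "F q = c" using ab t by auto
    then have "t \<in> (if F (fst (p,q)) = c \<and> F (snd (p,q)) = c then {fst (p,q)<..snd (p,q)} else {})"
      using p q by auto
    then show ?thesis using p q unfolding cover_def by blast
  qed
qed

lemma cover_null:
  assumes sets: "sets \<nu> = sets borel"
    and cnt: "\<And>A. countable A \<Longrightarrow> A \<in> null_sets \<nu>"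
    and em: "\<And>x. emeasure \<nu> {..x} = ennreal (F x)"
  shows "cover F c \<in> null_sets \<nu>"
proof -
  have iv: "{p<..q} \<in> null_sets \<nu>" if "F p = c" "F q = c" for p q
  proof (cases "p \<le> q")
    case True
    have "{p<..q} = {..q} - {..p}" by auto
    then have "emeasure \<nu> {p<..q} = emeasure \<nu> {..q} - emeasure \<nu> {..p}"
      using True sets by (simp add: emeasure_Diff em)
    also have "\<dots> = 0" using that em by simp
    finally show ?thesis using sets by (intro null_setsI) auto
  qed (use sets in auto)
  have U: "(\<Union>pq\<in>\<rat> \<times> \<rat>. if F (fst pq) = c \<and> F (snd pq) = c then {fst pq<..snd pq} else {}) \<in> null_sets \<nu>"
    by (rule null_sets_UN') (auto simp: countable_rat intro: iv)
  have f1: "finite {t. F t = c \<and> (\<forall>a. F a = c \<longrightarrow> t \<le> a)}"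
    by (rule subsingleton_finite) (auto intro: order.antisym)
  have f2: "finite {t. F t = c \<and> (\<forall>a. F a = c \<longrightarrow> a \<le> t)}"
    by (rule subsingleton_finite) (auto intro: order.antisym)
  show ?thesis unfolding cover_def
    using U cnt[OF countable_finite[OF f1]] cnt[OF countable_finite[OF f2]] by auto
qed

lemma AE_good:
  assumes sets: "sets \<nu> = sets borel"
    and cnt: "\<And>A. countable A \<Longrightarrow> A \<in> null_sets \<nu>"
    and em: "\<And>x. emeasure \<nu> {..x} = ennreal (F x)"
    and mono: "mono F" and b0: "\<And>x. 0 \<le> F x" and b1: "\<And>x. F x \<le> 1"
  shows "AE t in \<nu>. good F t"
proof (rule AE_I')
  show "(\<Union>q\<in>\<rat>. cover F (F q)) \<in> null_sets \<nu>"
    by (rule null_sets_UN') (auto simp: countable_rat intro: cover_null[OF sets cnt em])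
  show "{t \<in> space \<nu>. \<not> good F t} \<subseteq> (\<Union>q\<in>\<rat>. cover F (F q))"
  proof clarify
    fix t assume "\<not> good F t"
    have "\<exists>y. y \<noteq> t \<and> F y = F t"
    proof (cases "F t \<le> 0 \<or> 1 \<le> F t")
      case True
      show ?thesis
      proof (cases "F t \<le> 0")
        case True
        have "F (t - 1) \<le> F t" using mono by (auto intro: monoD)
        then show ?thesis using True b0[of "t-1"] by (intro exI[of _ "t-1"]) auto
      next
        case False
        then have "1 \<le> F t" using \<open>F t \<le> 0 \<or> 1 \<le> F t\<close> by auto
        have "F t \<le> F (t + 1)" using mono by (auto intro: monoD)
        then show ?thesis using \<open>1 \<le> F t\<close> b1[of "t+1"] by (intro exI[of _ "t+1"]) auto
      qed
    next
      case False
      then show ?thesis using \<open>\<not> good F t\<close> unfolding good_def by auto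
    qed
    then obtain y where y: "y \<noteq> t" "F y = F t" by auto
    have "\<exists>q\<in>\<rat>. F q = F t"
    proof (cases "y < t")
      case True
      obtain q where q: "q \<in> \<rat>" "y < q" "q < t" using Rats_dense_in_real[OF True] by auto
      have "F y \<le> F q" "F q \<le> F t" using q mono by (auto intro: monoD)
      then show ?thesis using q y by force
    next
      case False
      then have "t < y" using y by auto
      obtain q where q: "q \<in> \<rat>" "t < q" "q < y" using Rats_dense_in_real[OF \<open>t < y\<close>] by auto
      have "F t \<le> F q" "F q \<le> F y" using q mono by (auto intro: monoD)
      then show ?thesis using q y by force
    qed
    then obtain q where q: "q \<in> \<rat>" "F q = F t" by auto
    have "t \<in> cover F (F q)" using level_subset_cover[OF mono, of "F q"] q by auto
    then show "t \<in> (\<Union>q\<in>\<rat>. cover F (F q))" using q(1) by blast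
  qed
qed



lemma cdf_bounds:
  assumes "is_cdf J" shows "0 \<le> J x" "J x \<le> 1"
proof -
  have m: "mono J" and l0: "(J \<longlongrightarrow> 0) at_bot" and l1: "(J \<longlongrightarrow> 1) at_top"
    using assms unfolding is_cdf_def by auto
  have "eventually (\<lambda>y. J y \<le> J x) at_bot"
    unfolding eventually_at_bot_linorder by (auto intro!: exI[of _ x] monoD[OF m])
  then show "0 \<le> J x" using tendsto_le[OF trivial_limit_at_bot_linorder tendsto_const l0] by auto
  have "eventually (\<lambda>y. J x \<le> J y) at_top"
    unfolding eventually_at_top_linorder by (auto intro!: exI[of _ x] monoD[OF m])
  then show "J x \<le> 1" using tendsto_le[OF trivial_limit_at_top_linorder l1 tendsto_const] by auto
qed

locale ccdf =
  fixes J :: "real \<Rightarrow> real"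
  assumes m: "mono J" and c: "continuous_on UNIV J"
    and l0: "(J \<longlongrightarrow> 0) at_bot" and l1: "(J \<longlongrightarrow> 1) at_top"
begin

lemma S_ne: "0 < s \<Longrightarrow> s < 1 \<Longrightarrow> \<exists>y. s \<le> J y"
proof -
  assume "s < 1"
  then have "eventually (\<lambda>y. s < J y) at_top" using order_tendstoD(1)[OF l1] by auto
  then obtain y where "s < J y" unfolding eventually_at_top_linorder by auto
  then show ?thesis by (auto intro: less_imp_le)
qed

lemma S_bdd: "0 < s \<Longrightarrow> bdd_below {y. s \<le> J y}"
proof -
  assume "0 < s"
  then have "eventually (\<lambda>y. J y < s) at_bot" using order_tendstoD(2)[OF l0] by auto
  then obtain b where b: "\<And>y. y \<le> b \<Longrightarrow> J y < s" unfolding eventually_at_bot_linorder by auto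
  show ?thesis unfolding bdd_below_def
  proof (intro exI[of _ b] ballI)
    fix y assume "y \<in> {y. s \<le> J y}" then show "b \<le> y" using b[of y] by (cases "y \<le> b") auto
  qed
qed

lemma gi_ge: "0 < s \<Longrightarrow> s < 1 \<Longrightarrow> s \<le> J (genInv J s)"
proof -
  assume s: "0 < s" "s < 1"
  have "closed {y. s \<le> J y}" using c by (intro closed_Collect_le) (auto intro: continuous_intros)
  then have "Inf {y. s \<le> J y} \<in> {y. s \<le> J y}"
    using S_ne[OF s] S_bdd[OF s(1)] by (intro closed_contains_Inf) auto
  then show ?thesis by (simp add: genInv_def)
qed

lemma gi_le: "0 < s \<Longrightarrow> s \<le> J y \<Longrightarrow> genInv J s \<le> y"
  unfolding genInv_def by (rule cInf_lower) (use S_bdd in auto)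

lemma gi_less: "0 < s \<Longrightarrow> s < J b \<Longrightarrow> genInv J s < b"
proof -
  assume s: "0 < s" "s < J b"
  have "open {y. s < J y}" using c by (intro open_Collect_less) (auto intro: continuous_intros)
  then obtain e where e: "e > 0" "ball b e \<subseteq> {y. s < J y}" using s(2) by (auto simp: open_contains_ball)
  have "b - e/2 \<in> ball b e" using e(1) by (auto simp: dist_real_def)
  then have "s < J (b - e/2)" using e(2) by blast
  then have "genInv J s \<le> b - e/2" using gi_le s by (auto intro: less_imp_le)
  then show ?thesis using e(1) by auto
qed

end

lemma gi_strict:
  assumes "mono J" "\<forall>y. y \<noteq> t \<longrightarrow> J y \<noteq> J t"
  shows "genInv J (J t) = t"
proof -
  have "{y. J t \<le> J y} = {t..}"
  proof (auto intro: monoD[OF assms(1)])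
    fix y assume "J t \<le> J y" show "t \<le> y"
    proof (rule ccontr)
      assume "\<not> t \<le> y" then have "y < t" by auto
      then have "J y \<le> J t" "J y \<noteq> J t" using assms by (auto intro: monoD)
      then show False using \<open>J t \<le> J y\<close> by auto
    qed
  qed
  then show ?thesis unfolding genInv_def by simp
qed



lemma Fd_cdf: "Fd d F \<Longrightarrow> i \<in> {1..d} \<Longrightarrow> is_cdf (F i)"
  and Fd_cont: "Fd d F \<Longrightarrow> i \<in> {1..d} \<Longrightarrow> continuous_on UNIV (F i)"
  and Fd_ord: "Fd d F \<Longrightarrow> i \<in> {2..d} \<Longrightarrow> F i s \<le> F (i - 1) s"
  unfolding Fd_def by auto

lemma Fd_mono: "Fd d F \<Longrightarrow> i \<in> {1..d} \<Longrightarrow> mono (F i)"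
  using Fd_cdf unfolding is_cdf_def by auto

lemma G_ccdf:
  assumes F: "Fd d F" and d: "1 \<le> d"
  shows "ccdf (Gmix d F)"
proof
  show "mono (Gmix d F)" unfolding Gmix_def mono_def
    by (auto intro!: divide_right_mono sum_mono monoD[OF Fd_mono[OF F]])
  show "continuous_on UNIV (Gmix d F)" unfolding Gmix_def[abs_def]
    using Fd_cont[OF F] d by (intro continuous_intros) auto
  have "((\<lambda>s. (\<Sum>i\<in>{1..d}. F i s) / real d) \<longlongrightarrow> (\<Sum>i\<in>{1..d}. 0) / real d) at_bot"
    using Fd_cdf[OF F] d unfolding is_cdf_def by (intro tendsto_intros) auto
  then show "(Gmix d F \<longlongrightarrow> 0) at_bot" unfolding Gmix_def[abs_def] by simp
  have "((\<lambda>s. (\<Sum>i\<in>{1..d}. F i s) / real d) \<longlongrightarrow> (\<Sum>i\<in>{1..d}. 1) / real d) at_top"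
    using Fd_cdf[OF F] d unfolding is_cdf_def by (intro tendsto_intros) auto
  then show "(Gmix d F \<longlongrightarrow> 1) at_top" unfolding Gmix_def[abs_def] using d by simp
qed

lemma G_strict:
  assumes F: "Fd d F" and i: "i \<in> {1..d}" and g: "\<forall>y. y \<noteq> t \<longrightarrow> F i y \<noteq> F i t"
  shows "\<forall>y. y \<noteq> t \<longrightarrow> Gmix d F y \<noteq> Gmix d F t"
proof (intro allI impI)
  fix y assume "y \<noteq> t"
  have d: "0 < real d" using i by auto
  show "Gmix d F y \<noteq> Gmix d F t"
  proof (cases "y < t")
    case True
    have "F i y < F i t" using g \<open>y \<noteq> t\<close> monoD[OF Fd_mono[OF F i], of y t] True
      by (auto simp: order.order_iff_strict)
    then have "(\<Sum>j\<in>{1..d}. F j y) < (\<Sum>j\<in>{1..d}. F j t)"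
      using i True by (intro sum_strict_mono_ex1) (auto intro!: monoD[OF Fd_mono[OF F]])
    then show ?thesis unfolding Gmix_def using d by (auto simp: divide_right_mono)
  next
    case False
    then have ty: "t < y" using \<open>y \<noteq> t\<close> by auto
    have "F i t < F i y" using g \<open>y \<noteq> t\<close> monoD[OF Fd_mono[OF F i], of t y] ty
      by (auto simp: order.order_iff_strict)
    then have "(\<Sum>j\<in>{1..d}. F j t) < (\<Sum>j\<in>{1..d}. F j y)"
      using i ty by (intro sum_strict_mono_ex1) (auto intro!: monoD[OF Fd_mono[OF F]])
    then show ?thesis unfolding Gmix_def using d by auto
  qed
qed

lemma G_bounds:
  assumes F: "Fd d F" and i: "i \<in> {1..d}"
  shows "0 < F i t \<Longrightarrow> 0 < Gmix d F t" "F i t < 1 \<Longrightarrow> Gmix d F t < 1"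
    "0 \<le> Gmix d F t" "Gmix d F t \<le> 1"
proof -
  have d: "0 < real d" using i by auto
  have b: "\<And>j. j \<in> {1..d} \<Longrightarrow> 0 \<le> F j t \<and> F j t \<le> 1" using cdf_bounds Fd_cdf[OF F] by auto
  have "0 \<le> (\<Sum>j\<in>{1..d}. F j t)" using b by (intro sum_nonneg) auto
  then show "0 \<le> Gmix d F t" unfolding Gmix_def by auto
  have "(\<Sum>j\<in>{1..d}. F j t) \<le> (\<Sum>j\<in>{1..d}. 1)" using b by (intro sum_mono) auto
  then show "Gmix d F t \<le> 1" unfolding Gmix_def using d by auto
  show "0 < Gmix d F t" if "0 < F i t"
  proof -
    have "(\<Sum>j\<in>{1..d}. 0) < (\<Sum>j\<in>{1..d}. F j t)"
      using i that b by (intro sum_strict_mono_ex1) auto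
    then show ?thesis unfolding Gmix_def using d by auto
  qed
  show "Gmix d F t < 1" if "F i t < 1"
  proof -
    have "(\<Sum>j\<in>{1..d}. F j t) < (\<Sum>j\<in>{1..d}. 1)"
      using i that b by (intro sum_strict_mono_ex1) auto
    then show ?thesis unfolding Gmix_def using d by auto
  qed
qed

lemma delta_inv:
  assumes F: "Fd d F" and i: "i \<in> {1..d}" and g: "good (F i) t"
  shows "genInv (deltaF d F i) (F i t) = Gmix d F t"
proof -
  interpret G: ccdf "Gmix d F" using G_ccdf[OF F] i by auto
  have gs: "\<forall>y. y \<noteq> t \<longrightarrow> Gmix d F y \<noteq> Gmix d F t" using G_strict[OF F i] g unfolding good_def by auto
  have Gt: "0 < Gmix d F t" "Gmix d F t < 1" using G_bounds[OF F i] g unfolding good_def by auto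
  have mi: "mono (F i)" using Fd_mono[OF F i] .
  have gi: "genInv (Gmix d F) (Gmix d F t) = t" using gi_strict[OF G.m gs] .
  have mem: "F i t \<le> deltaF d F i (Gmix d F t)" unfolding deltaF_def using Gt gi by auto
  have low: "Gmix d F t \<le> s" if s: "F i t \<le> deltaF d F i s" for s
  proof (rule ccontr)
    assume "\<not> Gmix d F t \<le> s"
    then have sl: "s < Gmix d F t" by auto
    show False
    proof (cases "s \<le> 0")
      case True then show False using s g unfolding deltaF_def good_def by auto
    next
      case False
      then have s0: "0 < s" by auto
      have "genInv (Gmix d F) s < t" using G.gi_less[OF s0 sl] .
      then have "F i (genInv (Gmix d F) s) < F i t"
        using g monoD[OF mi, of "genInv (Gmix d F) s" t] unfolding good_def
        by (auto simp: order.order_iff_strict)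
      then show False using s s0 sl Gt unfolding deltaF_def by auto
    qed
  qed
  show ?thesis unfolding genInv_def
    by (rule cInf_eq_minimum) (use mem low in auto)
qed



lemma pair_equiv:
  assumes F: "Fd d F" and i: "i \<in> {2..d}" and ab: "a \<le> b"
    and ga: "good (F (i - 1)) a" and gb: "good (F i) b"
  shows "({a<..<b} \<subseteq> PsiF F i) \<longleftrightarrow> ({Gmix d F a<..<Gmix d F b} \<subseteq> PsiDelta (deltaF d F) i)"
proof -
  have i1: "i - 1 \<in> {1..d}" and i2: "i \<in> {1..d}" using i by auto
  interpret G: ccdf "Gmix d F" using G_ccdf[OF F] i by auto
  let ?G = "Gmix d F"
  have gsa: "\<forall>y. y \<noteq> a \<longrightarrow> ?G y \<noteq> ?G a" using G_strict[OF F i1] ga unfolding good_def by auto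
  have gsb: "\<forall>y. y \<noteq> b \<longrightarrow> ?G y \<noteq> ?G b" using G_strict[OF F i2] gb unfolding good_def by auto
  have Ga: "0 < ?G a" using G_bounds(1)[OF F i1] ga unfolding good_def by auto
  have Gb: "?G b < 1" using G_bounds(2)[OF F i2] gb unfolding good_def by auto
  have dl: "\<And>s. 0 < s \<Longrightarrow> s < 1 \<Longrightarrow> deltaF d F j s = F j (genInv ?G s)" for j
    unfolding deltaF_def by auto
  show ?thesis
  proof
    assume L: "{a<..<b} \<subseteq> PsiF F i"
    show "{?G a<..<?G b} \<subseteq> PsiDelta (deltaF d F) i"
    proof
      fix s assume s: "s \<in> {?G a<..<?G b}"
      then have s0: "0 < s" "s < 1" using Ga Gb by auto
      let ?y = "genInv ?G s"
      have "s \<le> ?G ?y" using G.gi_ge[OF s0] .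
      then have "a < ?y"
      proof -
        assume h: "s \<le> ?G ?y"
        show "a < ?y"
        proof (rule ccontr)
          assume "\<not> a < ?y"
          then have "?G ?y \<le> ?G a" using monoD[OF G.m] by auto
          then show False using h s by auto
        qed
      qed
      moreover have "?y < b" using G.gi_less[OF s0(1)] s by auto
      ultimately have "?y \<in> PsiF F i" using L by auto
      then show "s \<in> PsiDelta (deltaF d F) i"
        unfolding PsiF_def PsiDelta_def using s0 dl by auto
    qed
  next
    assume R: "{?G a<..<?G b} \<subseteq> PsiDelta (deltaF d F) i"
    show "{a<..<b} \<subseteq> PsiF F i"
    proof
      fix y assume y: "y \<in> {a<..<b}"
      have "?G a \<le> ?G y" "?G y \<le> ?G b" using y monoD[OF G.m] by auto
      then have "?G a < ?G y" "?G y < ?G b" using gsa gsb y by (auto simp: order.order_iff_strict)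
      then have "?G y \<in> PsiDelta (deltaF d F) i" using R by auto
      then have s0: "0 < ?G y" "?G y < 1" and P: "F (i - 1) (genInv ?G (?G y)) > F i (genInv ?G (?G y))"
        unfolding PsiDelta_def using dl by auto
      let ?y = "genInv ?G (?G y)"
      have yy: "?y \<le> y" using G.gi_le[OF s0(1)] by auto
      have "?G y \<le> ?G ?y" using G.gi_ge[OF s0] .
      moreover have "?G ?y \<le> ?G y" using yy monoD[OF G.m] by auto
      ultimately have eqG: "?G ?y = ?G y" by auto
      have nn: "\<forall>j\<in>{1..d}. 0 \<le> F j y - F j ?y" using yy by (auto intro!: monoD[OF Fd_mono[OF F]])
      have "(\<Sum>j\<in>{1..d}. F j y - F j ?y) = (\<Sum>j\<in>{1..d}. F j y) - (\<Sum>j\<in>{1..d}. F j ?y)"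
        by (simp add: sum_subtractf)
      also have "\<dots> = 0" using eqG i unfolding Gmix_def by auto
      finally have "\<forall>j\<in>{1..d}. F j y - F j ?y = 0"
        using nn sum_nonneg_eq_0_iff[of "{1..d}" "\<lambda>j. F j y - F j ?y"] by (simp del: atLeastAtMost_iff)
      then have "F (i - 1) y = F (i - 1) ?y" "F i y = F i ?y" using i1 i2 by auto
      then show "y \<in> PsiF F i" unfolding PsiF_def using P by auto
    qed
  qed
qed

lemma chain_mono:
  fixes d :: nat and u :: "nat \<Rightarrow> real"
  assumes "\<forall>i\<in>{2..d}. u (i - 1) \<le> (u i :: real)"
  shows "1 \<le> i \<Longrightarrow> i \<le> j \<Longrightarrow> j \<le> d \<Longrightarrow> u i \<le> u j"
proof (induction j)
  case 0 then show ?case by auto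
next
  case (Suc j)
  show ?case
  proof (cases "i = Suc j")
    case False
    then have "u i \<le> u j" using Suc by auto
    moreover have "u j \<le> u (Suc j)" using assms Suc False by (auto dest: bspec[of _ _ "Suc j"])
    ultimately show ?thesis by auto
  qed simp
qed

lemma ord_stat_sorted:
  fixes d :: nat and u :: "nat \<Rightarrow> real"
  assumes "\<forall>i\<in>{2..d}. u (i - 1) \<le> (u i :: real)" and k: "k \<in> {1..d}"
  shows "ord_stat d u k = u k"
proof -
  have nth: "map u [1..<d+1] ! k = u (1 + k)" if "k < d" for k
    using that by (simp del: upt_Suc)
  have "sorted (map u [1..<d+1])"
    unfolding sorted_iff_nth_mono
  proof (intro allI impI)
    fix i j assume ij: "i \<le> j" "j < length (map u [1..<d+1])"
    then have "j < d" by (simp del: upt_Suc)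
    then show "map u [1..<d+1] ! i \<le> map u [1..<d+1] ! j"
      using ij nth chain_mono[OF assms(1), of "1+i" "1+j"] by simp
  qed
  then have "sort (map u [1..<d+1]) = map u [1..<d+1]" by (rule sorted_sort_id)
  then show ?thesis unfolding ord_stat_def using k nth[of "k - 1"] by auto
qed



lemma pointwise:
  assumes F: "Fd d F" and g: "\<forall>i\<in>{1..d}. good (F i) (x i)"
  shows "indicator (TF d F) (\<lambda>i. F i (x i))
           * indicator (Ldelta d (deltaF d F)) (\<lambda>i. genInv (deltaF d F i) (F i (x i)))
           = (indicator (LF d F) x :: real)"
proof -
  define u where "u = (\<lambda>i. genInv (deltaF d F i) (F i (x i)))"
  let ?G = "Gmix d F"
  have uG: "\<And>i. i \<in> {1..d} \<Longrightarrow> u i = ?G (x i)" unfolding u_def using delta_inv[OF F] g by auto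
  have gi: "\<And>i. i \<in> {1..d} \<Longrightarrow> genInv (F i) (F i (x i)) = x i"
    using gi_strict[OF Fd_mono[OF F]] g unfolding good_def by auto
  have b01: "\<And>i. i \<in> {1..d} \<Longrightarrow> F i (x i) \<in> {0..1}" using cdf_bounds[OF Fd_cdf[OF F]] by auto
  define srt where "srt = (\<forall>i\<in>{2..d}. x (i - 1) \<le> x i)"
  have gi2: "\<forall>i\<in>{2..d}. genInv (F (i - 1)) (F (i - 1) (x (i - 1))) = x (i - 1) \<and> genInv (F i) (F i (x i)) = x i"
  proof
    fix i assume "i \<in> {2..d}" then have "i - 1 \<in> {1..d}" "i \<in> {1..d}" by auto
    then show "genInv (F (i - 1)) (F (i - 1) (x (i - 1))) = x (i - 1) \<and> genInv (F i) (F i (x i)) = x i"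
      using gi by blast
  qed
  have TFi: "(\<lambda>i. F i (x i)) \<in> TF d F \<longleftrightarrow> srt"
  proof -
    have e1: "(\<forall>i\<in>{2..d}. genInv (F (i - 1)) (F (i - 1) (x (i - 1))) \<le> genInv (F i) (F i (x i)))
       \<longleftrightarrow> (\<forall>i\<in>{2..d}. x (i - 1) \<le> x i)"
      by (rule ball_cong) (use gi2 in auto)
    have e2: "\<forall>i\<in>{1..d}. F i (x i) \<in> {0..1}" using b01 by blast
    show ?thesis unfolding TF_def srt_def mem_Collect_eq using e1 e2 by blast
  qed
  show ?thesis
  proof (cases srt)
    case False
    then have "x \<notin> LF d F" unfolding LF_def srt_def by auto
    then show ?thesis using False TFi unfolding u_def[symmetric] by simp
  next
    case True
    have usrt: "\<forall>i\<in>{2..d}. u (i - 1) \<le> u i"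
    proof
      fix i assume i: "i \<in> {2..d}"
      then have "i - 1 \<in> {1..d}" "i \<in> {1..d}" by auto
      moreover have "x (i - 1) \<le> x i" using True i unfolding srt_def by auto
      ultimately show "u (i - 1) \<le> u i" using uG
        using monoD[OF ccdf.m[OF G_ccdf[OF F]]] by auto
    qed
    have os: "\<And>k. k \<in> {1..d} \<Longrightarrow> ord_stat d u k = u k" using ord_stat_sorted[OF usrt] by auto
    have os2: "\<forall>i\<in>{2..d}. ord_stat d u (i - 1) = u (i - 1) \<and> ord_stat d u i = u i"
    proof
      fix i assume "i \<in> {2..d}" then have "i - 1 \<in> {1..d}" "i \<in> {1..d}" by auto
      then show "ord_stat d u (i - 1) = u (i - 1) \<and> ord_stat d u i = u i" using os by blast
    qed
    have u01: "\<forall>i\<in>{1..d}. u i \<in> {0..1}" using uG G_bounds(3,4)[OF F] by auto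
    have "u \<in> Ldelta d (deltaF d F) \<longleftrightarrow> (\<forall>i\<in>{2..d}. {u (i - 1)<..<u i} \<subseteq> PsiDelta (deltaF d F) i)"
      unfolding Ldelta_def mem_Collect_eq using u01 os2
      by (auto intro!: ball_cong)
    also have "\<dots> \<longleftrightarrow> (\<forall>i\<in>{2..d}. {x (i - 1)<..<x i} \<subseteq> PsiF F i)"
    proof (intro ball_cong refl)
      fix i assume i: "i \<in> {2..d}"
      then have i1: "i - 1 \<in> {1..d}" and i2: "i \<in> {1..d}" by auto
      have "x (i - 1) \<le> x i" using True i unfolding srt_def by auto
      from pair_equiv[OF F i this] g i1 i2 uG
      show "{u (i - 1)<..<u i} \<subseteq> PsiDelta (deltaF d F) i \<longleftrightarrow> {x (i - 1)<..<x i} \<subseteq> PsiF F i"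
        by auto
    qed
    also have "\<dots> \<longleftrightarrow> x \<in> LF d F" using True unfolding LF_def srt_def by auto
    finally show ?thesis using True TFi unfolding u_def[symmetric] by (simp add: indicator_def)
  qed
qed



theorem mainTheorem18:
  fixes d :: nat and F f :: "nat \<Rightarrow> real \<Rightarrow> real"
  assumes "Fd0 d F"
    and "\<forall>i\<in>{1..d}. f i \<in> borel_measurable borel \<and> (\<forall>t. 0 \<le> f i t)
           \<and> (\<forall>x. emeasure (density lborel (f i)) {..x} = ennreal (F i x))"
  shows "AE x in density (PiM {1..d} (\<lambda>_. lborel)) (\<lambda>x. \<Prod>i\<in>{1..d}. ennreal (f i (x i))).
           indicator (TF d F) (\<lambda>i. F i (x i))
           * indicator (Ldelta d (deltaF d F)) (\<lambda>i. genInv (deltaF d F i) (F i (x i)))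
           = (indicator (LF d F) x :: real)"
proof -
  have F: "Fd d F" using assms(1) unfolding Fd0_def by auto
  have comp: "AE x in PiM {1..d} (\<lambda>_. lborel). 0 < ennreal (f i (x i)) \<longrightarrow> good (F i) (x i)"
    if i: "i \<in> {1..d}" for i
  proof -
    have fm: "f i \<in> borel_measurable borel" and em: "\<And>x. emeasure (density lborel (f i)) {..x} = ennreal (F i x)"
      using assms(2) i by auto
    have fm': "(\<lambda>t. ennreal (f i t)) \<in> borel_measurable lborel" using fm by auto
    have "AE t in density lborel (f i). good (F i) t"
    proof (rule AE_good)
      show "sets (density lborel (f i)) = sets borel" by simp
      show "A \<in> null_sets (density lborel (f i))" if "countable A" for A
        unfolding null_sets_density_iff[OF fm']
        using countable_imp_null_set_lborel[OF that] AE_not_in[OF countable_imp_null_set_lborel[OF that]]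
        by (auto elim: AE_mp)
      show "\<And>x. emeasure (density lborel (f i)) {..x} = ennreal (F i x)" by (rule em)
      show "mono (F i)" using Fd_mono[OF F i] .
      show "\<And>x. 0 \<le> F i x" "\<And>x. F i x \<le> 1" using cdf_bounds[OF Fd_cdf[OF F i]] by auto
    qed
    then have "AE t in lborel. 0 < ennreal (f i t) \<longrightarrow> good (F i) t"
      using AE_density[OF fm'] by simp
    from AE_PiM_component[OF _ i this] show ?thesis by simp
  qed
  then have all: "AE x in PiM {1..d} (\<lambda>_. lborel). \<forall>i\<in>{1..d}. 0 < ennreal (f i (x i)) \<longrightarrow> good (F i) (x i)"
    by (intro AE_finite_allI) auto
  have cm: "(\<lambda>x. ennreal (f i (x i))) \<in> borel_measurable (PiM {1..d} (\<lambda>_. lborel))"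
    if i: "i \<in> {1..d}" for i
  proof -
    have "(\<lambda>t. ennreal (f i t)) \<in> borel_measurable lborel" using assms(2) i by auto
    from measurable_compose[OF measurable_component_singleton[OF i] this] show ?thesis by simp
  qed
  have pm: "(\<lambda>x. \<Prod>i\<in>{1..d}. ennreal (f i (x i))) \<in> borel_measurable (PiM {1..d} (\<lambda>_. lborel))"
    using cm by (rule borel_measurable_prod_ennreal)
  show ?thesis
    unfolding AE_density[OF pm]
  proof (rule eventually_mono[OF all], intro impI)
    fix x assume h: "\<forall>i\<in>{1..d}. 0 < ennreal (f i (x i)) \<longrightarrow> good (F i) (x i)"
      and p: "0 < (\<Prod>i\<in>{1..d}. ennreal (f i (x i)))"
    have "\<forall>i\<in>{1..d}. good (F i) (x i)"
    proof
      fix i assume i: "i \<in> {1..d}"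
      have "ennreal (f i (x i)) \<noteq> 0"
      proof
        assume "ennreal (f i (x i)) = 0"
        then have "(\<Prod>i\<in>{1..d}. ennreal (f i (x i))) = 0" using i by (intro prod_zero) auto
        then show False using p by (metis less_irrefl)
      qed
      then show "good (F i) (x i)" using h i by (auto simp: zero_less_iff_neq_zero)
    qed
    then show "indicator (TF d F) (\<lambda>i. F i (x i))
           * indicator (Ldelta d (deltaF d F)) (\<lambda>i. genInv (deltaF d F i) (F i (x i)))
           = (indicator (LF d F) x :: real)" by (rule pointwise[OF F])
  qed
qed


end
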